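(* Let $L:\mathbb{R}^n\to\mathbb{R}$ be $\mathcal{C}^1$, convex, with a unique minimizer $z_1^*$, $L^*=L(z_1^* )$. Let $\lambda>0$, $\gamma>0$, and let $\psi>0$ be such that $\nu:=\psi(\psi-\lambda)<0$. Define $$V(z):=\gamma(L(z_1)-L^* )+\tfrac12|\psi(z_1-z_1^* )+z_2|^2+\tfrac{\nu}{2}|z_1-z_1^*|^2,\quad z=(z_1,z_2)\in\mathbb{R}^{2n},$$ and let $\dot V(z):=\langle\nabla V(z),(z_2,-\lambda z_2-\gamma\nabla L(z_1))\rangle$. Then for each $z\in\mathbb{R}^{2n}$, $$\dot V(z)\le-\psi\big(a(z_1)+2\nu c(z_1)\big)+2(\psi-\lambda)b(z),$$ where $a(z_1):=\gamma(L(z_1)-L^* )$, $b(z):=\tfrac12|\psi(z_1-z_1^* )+z_2|^2$, $c(z_1):=\tfrac12|z_1-z_1^*|^2$.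
   Context: Convexity means $L(u)\ge L(w)+\langle\nabla L(w),u-w\rangle$ for all $u,w$. *)

theory Defs
  imports "HOL-Analysis.Analysis"
begin

definition lyapV :: "('a::euclidean_space \<Rightarrow> real) \<Rightarrow> 'a \<Rightarrow> real \<Rightarrow> real \<Rightarrow> real \<Rightarrow> 'a \<times> 'a \<Rightarrow> real" where
  "lyapV L zs \<gamma> \<psi> \<nu> z =
     \<gamma> * (L (fst z) - L zs) + (1/2) * (norm (\<psi> *\<^sub>R (fst z - zs) + snd z))^2
     + (\<nu>/2) * (norm (fst z - zs))^2"

definition lyapVdot :: "('a::euclidean_space \<Rightarrow> real) \<Rightarrow> ('a \<Rightarrow> 'a) \<Rightarrow> 'a \<Rightarrow> real \<Rightarrow> real \<Rightarrow> real \<Rightarrow> real \<Rightarrow> 'a \<times> 'a \<Rightarrow> real" where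
  "lyapVdot L gL zs lam \<gamma> \<psi> \<nu> z =
     frechet_derivative (lyapV L zs \<gamma> \<psi> \<nu>) (at z)
       (snd z, - (lam *\<^sub>R snd z) - \<gamma> *\<^sub>R gL (fst z))"

end

theory Submission
  imports Defs
begin

lemma grad_ineq:
  fixes L :: "'a::euclidean_space \<Rightarrow> real" and gL :: "'a \<Rightarrow> 'a"
  assumes grad: "\<And>x. (L has_derivative (\<lambda>h. gL x \<bullet> h)) (at x)"
    and cvx: "convex_on UNIV L"
  shows "L y - L x \<ge> gL x \<bullet> (y - x)"
proof -
  define g where "g = (\<lambda>t::real. L (x + t *\<^sub>R (y - x)))"
  have cg: "convex_on UNIV g"
  proof (rule convex_onI)
    fix u s t :: real assume "0 < u" "u < 1"
    have "x + ((1 - u) * s + u * t) *\<^sub>R (y - x) = (1 - u) *\<^sub>R (x + s *\<^sub>R (y - x)) + u *\<^sub>R (x + t *\<^sub>R (y - x))"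
      by (simp add: algebra_simps)
    then show "g ((1 - u) *\<^sub>R s + u *\<^sub>R t) \<le> (1 - u) * g s + u * g t"
      unfolding g_def using convex_onD[OF cvx, of u "x + s *\<^sub>R (y - x)" "x + t *\<^sub>R (y - x)"] \<open>0<u\<close> \<open>u<1\<close>
      by simp
  qed simp
  have d: "(g has_field_derivative (gL x \<bullet> (y - x))) (at 0)"
  proof -
    have "((\<lambda>t::real. x + t *\<^sub>R (y - x)) has_derivative (\<lambda>t. t *\<^sub>R (y - x))) (at 0)"
      by (auto intro!: derivative_eq_intros)
    moreover have "(L has_derivative (\<lambda>h. gL x \<bullet> h)) (at ((\<lambda>t::real. x + t *\<^sub>R (y - x)) 0))"
      using grad[of x] by simp
    ultimately have "((\<lambda>t. L ((\<lambda>t::real. x + t *\<^sub>R (y - x)) t)) has_derivative (\<lambda>t. gL x \<bullet> (t *\<^sub>R (y - x)))) (at 0)"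
      by (rule has_derivative_compose)
    then have "(g has_derivative (\<lambda>t. t * (gL x \<bullet> (y - x)))) (at 0)"
      by (simp add: g_def)
    then show ?thesis
      by (simp add: has_field_derivative_def mult_commute_abs)
  qed
  have "g 1 - g 0 \<ge> (gL x \<bullet> (y - x)) * (1 - 0)"
    by (rule convex_on_imp_above_tangent[OF cg]) (use d in auto)
  then show ?thesis by (simp add: g_def)
qed

lemma hasder:
  fixes L :: "'a::euclidean_space \<Rightarrow> real" and z :: "'a \<times> 'a"
  assumes gL': "((\<lambda>p. L (fst p)) has_derivative (\<lambda>h. g \<bullet> fst h)) (at z)"
  shows "((\<lambda>p. \<gamma> * (L (fst p) - L zs) + (1/2) * ((\<psi> *\<^sub>R (fst p - zs) + snd p) \<bullet> (\<psi> *\<^sub>R (fst p - zs) + snd p))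
       + (\<nu>/2) * ((fst p - zs) \<bullet> (fst p - zs))) has_derivative
     (\<lambda>(h1, h2). \<gamma> * (g \<bullet> h1) + (\<psi> *\<^sub>R (fst z - zs) + snd z) \<bullet> (\<psi> *\<^sub>R h1 + h2) + \<nu> * ((fst z - zs) \<bullet> h1))) (at z)"
  apply (rule has_derivative_eq_rhs)
   apply (rule derivative_eq_intros gL' refl)+
  apply (rule ext)
  apply (clarsimp simp: inner_add_left inner_add_right inner_diff_left inner_diff_right inner_commute)
  apply (simp add: field_simps)
  done
lemma Dcalc:
  fixes g x y :: "'a::real_inner"
  shows "\<gamma> * (g \<bullet> y) + (\<psi> *\<^sub>R x + y) \<bullet> (\<psi> *\<^sub>R y + (- (lam *\<^sub>R y) - \<gamma> *\<^sub>R g)) + (\<psi> * (\<psi> - lam)) * (x \<bullet> y)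
    = - \<gamma> * \<psi> * (g \<bullet> x) + (\<psi> - lam) * ((\<psi> *\<^sub>R x + y) \<bullet> (\<psi> *\<^sub>R x + y)) - (\<psi> * (\<psi> - lam)) * \<psi> * (x \<bullet> x)"
proof -
  have c1: "y \<bullet> g = g \<bullet> y" "x \<bullet> g = g \<bullet> x" "y \<bullet> x = x \<bullet> y" by (simp_all add: inner_commute)
  show ?thesis
    by (simp add: inner_add_left inner_add_right inner_diff_left inner_diff_right c1 inner_minus_left inner_minus_right) algebra
qed
theorem lemma5p2:
  fixes L :: "'a::euclidean_space \<Rightarrow> real"
    and gL :: "'a \<Rightarrow> 'a"
    and zs :: 'a
    and lam \<gamma> \<psi> :: real
    and z :: "'a \<times> 'a"
  assumes grad: "\<And>x. (L has_derivative (\<lambda>h. gL x \<bullet> h)) (at x)"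
    and C1: "continuous_on UNIV gL"
    and cvx: "convex_on UNIV L"
    and minim: "\<And>x. L zs \<le> L x"
    and uniq: "\<And>x. L x = L zs \<Longrightarrow> x = zs"
    and lam: "lam > 0" and gam: "\<gamma> > 0" and psi: "\<psi> > 0"
    and nu: "\<psi> * (\<psi> - lam) < 0"
  shows "lyapVdot L gL zs lam \<gamma> \<psi> (\<psi> * (\<psi> - lam)) z
     \<le> - \<psi> * (\<gamma> * (L (fst z) - L zs)
               + 2 * (\<psi> * (\<psi> - lam)) * ((1/2) * (norm (fst z - zs))^2))
       + 2 * (\<psi> - lam) * ((1/2) * (norm (\<psi> *\<^sub>R (fst z - zs) + snd z))^2)"
proof -
  define \<nu> where "\<nu> = \<psi> * (\<psi> - lam)"
  obtain z1 z2 where z: "z = (z1, z2)" by (cases z)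
  define x where "x = z1 - zs"
  define w where "w = \<psi> *\<^sub>R x + z2"
  define g where "g = gL z1"
  define D where "D = (\<lambda>(h1::'a, h2::'a). \<gamma> * (g \<bullet> h1) + (\<psi> *\<^sub>R (fst z - zs) + snd z) \<bullet> (\<psi> *\<^sub>R h1 + h2) + \<nu> * ((fst z - zs) \<bullet> h1))"
  have e: "lyapV L zs \<gamma> \<psi> \<nu> = (\<lambda>p. \<gamma> * (L (fst p) - L zs) + (1/2) * ((\<psi> *\<^sub>R (fst p - zs) + snd p) \<bullet> (\<psi> *\<^sub>R (fst p - zs) + snd p))
       + (\<nu>/2) * ((fst p - zs) \<bullet> (fst p - zs)))"
    by (auto simp: lyapV_def fun_eq_iff power2_norm_eq_inner)
  have gL': "((\<lambda>p. L (fst p)) has_derivative (\<lambda>h. g \<bullet> fst h)) (at z)"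
    using has_derivative_compose[OF has_derivative_fst[OF has_derivative_ident] grad[of "fst z"]]
    by (simp add: o_def g_def z)
  have hd: "(lyapV L zs \<gamma> \<psi> \<nu> has_derivative D) (at z)"
    unfolding e D_def by (rule hasder[OF gL'])
  have Vd: "lyapVdot L gL zs lam \<gamma> \<psi> \<nu> z = D (z2, - (lam *\<^sub>R z2) - \<gamma> *\<^sub>R g)"
    unfolding lyapVdot_def using frechet_derivative_at[OF hd] by (simp add: z g_def)
  have Dv: "D (z2, - (lam *\<^sub>R z2) - \<gamma> *\<^sub>R g) = - \<gamma> * \<psi> * (g \<bullet> x) + (\<psi> - lam) * (w \<bullet> w) - \<nu> * \<psi> * (x \<bullet> x)"
    unfolding D_def w_def \<nu>_def using Dcalc[of \<gamma> g z2 \<psi> x lam] by (simp add: z x_def)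
  have gi: "L z1 - L zs \<le> g \<bullet> x"
    using grad_ineq[OF grad cvx, of z1 zs] by (simp add: g_def x_def inner_diff_right)
  have gi2: "\<gamma> * \<psi> * (L z1 - L zs) \<le> \<gamma> * \<psi> * (g \<bullet> x)"
    using gi gam psi by (simp add: mult_left_mono)
  have n1: "norm (\<psi> *\<^sub>R (fst z - zs) + snd z) ^ 2 = w \<bullet> w" and n2: "norm (fst z - zs) ^ 2 = x \<bullet> x"
    and f: "fst z = z1"
    by (simp_all add: z power2_norm_eq_inner x_def w_def)
  have r: "- \<psi> * (\<gamma> * (L z1 - L zs) + 2 * \<nu> * ((1/2) * (x \<bullet> x))) + 2 * (\<psi> - lam) * ((1/2) * (w \<bullet> w))
     = - (\<gamma> * \<psi> * (L z1 - L zs)) + (\<psi> - lam) * (w \<bullet> w) - \<nu> * \<psi> * (x \<bullet> x)"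
    by algebra
  have gi3: "- \<gamma> * \<psi> * (g \<bullet> x) \<le> - (\<gamma> * \<psi> * (L z1 - L zs))"
    using gi2 by simp
  show ?thesis
    unfolding \<nu>_def[symmetric] Vd Dv n1 n2
    unfolding f r using gi3 by linarith
qed

end
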